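(* Let $n,d \ge 1$. A general form $p \in H_d(\mathbb{C}^n)$ is a sum of $N(n,d-1) = \binom{n+d-2}{d-1}$ $d$-th powers of linear forms.
   Context: $H_d(\mathbb{C}^n)$ denotes the complex vector space of homogeneous polynomials of degree $d$ in $n$ variables. Its dimension is $N(n,d)=\binom{n+d-1}{d}$. "A general $p$ has property P" means P holds for all $p$ in a nonempty Zariski-open subset of $H_d(\mathbb{C}^n)$. *)

theory Defs
  imports Complex_Main
begin

definition monoms :: "nat \<Rightarrow> nat \<Rightarrow> (nat \<Rightarrow> nat) set" where
  "monoms n d = {\<alpha>. (\<forall>i\<ge>n. \<alpha> i = 0) \<and> (\<Sum>i<n. \<alpha> i) = d}"

text \<open>H_d(C^n): a form is given by its coefficient family, supported on monoms n d.\<close>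
definition forms :: "nat \<Rightarrow> nat \<Rightarrow> ((nat \<Rightarrow> nat) \<Rightarrow> complex) set" where
  "forms n d = {p. \<forall>\<alpha>. \<alpha> \<notin> monoms n d \<longrightarrow> p \<alpha> = 0}"

definition eval_form :: "nat \<Rightarrow> nat \<Rightarrow> ((nat \<Rightarrow> nat) \<Rightarrow> complex) \<Rightarrow> (nat \<Rightarrow> complex) \<Rightarrow> complex" where
  "eval_form n d p x = (\<Sum>\<alpha>\<in>monoms n d. p \<alpha> * (\<Prod>i<n. x i ^ \<alpha> i))"

definition sum_of_powers :: "nat \<Rightarrow> nat \<Rightarrow> nat \<Rightarrow> ((nat \<Rightarrow> nat) \<Rightarrow> complex) \<Rightarrow> bool" where
  "sum_of_powers n d r p \<longleftrightarrow> (\<exists>l :: nat \<Rightarrow> nat \<Rightarrow> complex.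
      \<forall>x. eval_form n d p x = (\<Sum>j<r. (\<Sum>i<n. l j i * x i) ^ d))"

inductive coeff_poly :: "(nat \<Rightarrow> nat) set \<Rightarrow> (((nat \<Rightarrow> nat) \<Rightarrow> complex) \<Rightarrow> complex) \<Rightarrow> bool"
  for M where
  const: "coeff_poly M (\<lambda>p. c)"
| coord: "\<alpha> \<in> M \<Longrightarrow> coeff_poly M (\<lambda>p. p \<alpha>)"
| add: "coeff_poly M f \<Longrightarrow> coeff_poly M g \<Longrightarrow> coeff_poly M (\<lambda>p. f p + g p)"
| mult: "coeff_poly M f \<Longrightarrow> coeff_poly M g \<Longrightarrow> coeff_poly M (\<lambda>p. f p * g p)"

text \<open>Zariski-open subsets of H_d(C^n): complements of common zero sets of polynomials.\<close>
definition zariski_open_forms :: "nat \<Rightarrow> nat \<Rightarrow> ((nat \<Rightarrow> nat) \<Rightarrow> complex) set \<Rightarrow> bool" where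
  "zariski_open_forms n d U \<longleftrightarrow> (\<exists>S. (\<forall>f\<in>S. coeff_poly (monoms n d) f) \<and>
      U = {p \<in> forms n d. \<exists>f\<in>S. f p \<noteq> 0})"

definition general_form :: "nat \<Rightarrow> nat \<Rightarrow> (((nat \<Rightarrow> nat) \<Rightarrow> complex) \<Rightarrow> bool) \<Rightarrow> bool" where
  "general_form n d P \<longleftrightarrow> (\<exists>U. zariski_open_forms n d U \<and> U \<noteq> {} \<and> (\<forall>p\<in>U. P p))"

end

theory Submission
  imports Defs
begin


lemma monoms_finite: "finite (monoms n d)"
proof -
  have "monoms n d \<subseteq> {f. \<forall>x. (x \<in> {..<n} \<longrightarrow> f x \<in> {..d}) \<and> (x \<notin> {..<n} \<longrightarrow> f x = 0)}"
  proof
    fix \<alpha> assume a: "\<alpha> \<in> monoms n d"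
    have "\<forall>x<n. \<alpha> x \<le> d"
    proof (intro allI impI)
      fix x assume "x < n"
      then have "\<alpha> x \<le> (\<Sum>i<n. \<alpha> i)" by (intro member_le_sum) auto
      then show "\<alpha> x \<le> d" using a by (simp add: monoms_def)
    qed
    then show "\<alpha> \<in> {f. \<forall>x. (x \<in> {..<n} \<longrightarrow> f x \<in> {..d}) \<and> (x \<notin> {..<n} \<longrightarrow> f x = 0)}"
      using a by (auto simp: monoms_def)
  qed
  then show ?thesis by (rule finite_subset) (intro finite_set_of_finite_funs; simp)
qed

lemma cp_neg: "coeff_poly M f \<Longrightarrow> coeff_poly M (\<lambda>p. - f p)"
proof -
  assume f: "coeff_poly M f"
  have "coeff_poly M (\<lambda>p. (-1) * f p)" by (rule coeff_poly.mult[OF coeff_poly.const f])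
  then show ?thesis by simp
qed

lemma cp_sub: "coeff_poly M f \<Longrightarrow> coeff_poly M g \<Longrightarrow> coeff_poly M (\<lambda>p. f p - g p)"
proof -
  assume f: "coeff_poly M f" and g: "coeff_poly M g"
  have "coeff_poly M (\<lambda>p. f p + - g p)" by (rule coeff_poly.add[OF f cp_neg[OF g]])
  then show ?thesis by simp
qed

lemma cp_power: "coeff_poly M f \<Longrightarrow> coeff_poly M (\<lambda>p. f p ^ k)"
  by (induction k) (auto intro: coeff_poly.intros)

lemma cp_sum: "finite J \<Longrightarrow> (\<And>j. j \<in> J \<Longrightarrow> coeff_poly M (f j)) \<Longrightarrow> coeff_poly M (\<lambda>p. \<Sum>j\<in>J. f j p)"
  by (induction J rule: finite_induct) (auto intro: coeff_poly.intros)

lemma cp_prod: "finite J \<Longrightarrow> (\<And>j. j \<in> J \<Longrightarrow> coeff_poly M (f j)) \<Longrightarrow> coeff_poly M (\<lambda>p. \<Prod>j\<in>J. f j p)"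
  by (induction J rule: finite_induct) (auto intro: coeff_poly.intros)

lemma cp_cong: "coeff_poly M f \<Longrightarrow> (\<forall>\<alpha>\<in>M. p \<alpha> = p' \<alpha>) \<Longrightarrow> f p = f p'"
  by (induction rule: coeff_poly.induct) auto

lemma cp_comp: "coeff_poly M' F \<Longrightarrow> (\<And>\<beta>. \<beta> \<in> M' \<Longrightarrow> coeff_poly M (\<lambda>p. R p \<beta>)) \<Longrightarrow> coeff_poly M (\<lambda>p. F (R p))"
  by (induction rule: coeff_poly.induct) (auto intro: coeff_poly.intros)

definition rat_on :: "(nat \<Rightarrow> nat) set \<Rightarrow> (((nat \<Rightarrow> nat) \<Rightarrow> complex) \<Rightarrow> complex) \<Rightarrow> (((nat \<Rightarrow> nat) \<Rightarrow> complex) \<Rightarrow> complex) \<Rightarrow> bool" where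
  "rat_on M \<Delta> g \<longleftrightarrow> (\<exists>N k. coeff_poly M N \<and> (\<forall>p. \<Delta> p \<noteq> 0 \<longrightarrow> g p * \<Delta> p ^ k = N p))"


lemma rat_on_big:
  assumes "coeff_poly M \<Delta>" "rat_on M \<Delta> g"
  shows "\<exists>k. \<forall>k'\<ge>k. \<exists>N. coeff_poly M N \<and> (\<forall>p. \<Delta> p \<noteq> 0 \<longrightarrow> g p * \<Delta> p ^ k' = N p)"
proof -
  obtain N k where N: "coeff_poly M N" "\<forall>p. \<Delta> p \<noteq> 0 \<longrightarrow> g p * \<Delta> p ^ k = N p"
    using assms(2) unfolding rat_on_def by blast
  show ?thesis
  proof (rule exI[of _ k], intro allI impI)
    fix k' assume "k \<le> k'"
    then obtain j where j: "k' = k + j" using le_Suc_ex by blast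
    show "\<exists>N. coeff_poly M N \<and> (\<forall>p. \<Delta> p \<noteq> 0 \<longrightarrow> g p * \<Delta> p ^ k' = N p)"
      by (rule exI[of _ "\<lambda>p. N p * \<Delta> p ^ j"])
         (use N assms(1) in \<open>auto simp: j power_add intro!: coeff_poly.mult cp_power\<close>)
  qed
qed

lemma rat_on_poly: "coeff_poly M g \<Longrightarrow> rat_on M \<Delta> g"
  unfolding rat_on_def by (rule exI[of _ g], rule exI[of _ 0]) simp

lemma rat_on_cong: "rat_on M \<Delta> g \<Longrightarrow> (\<And>p. \<Delta> p \<noteq> 0 \<Longrightarrow> g p = g' p) \<Longrightarrow> rat_on M \<Delta> g'"
  unfolding rat_on_def by metis

lemma rat_on_add:
  assumes "coeff_poly M \<Delta>" "rat_on M \<Delta> f" "rat_on M \<Delta> g"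
  shows "rat_on M \<Delta> (\<lambda>p. f p + g p)"
proof -
  obtain k1 where k1: "\<forall>k'\<ge>k1. \<exists>N. coeff_poly M N \<and> (\<forall>p. \<Delta> p \<noteq> 0 \<longrightarrow> f p * \<Delta> p ^ k' = N p)"
    using rat_on_big[OF assms(1,2)] by blast
  obtain k2 where k2: "\<forall>k'\<ge>k2. \<exists>N. coeff_poly M N \<and> (\<forall>p. \<Delta> p \<noteq> 0 \<longrightarrow> g p * \<Delta> p ^ k' = N p)"
    using rat_on_big[OF assms(1,3)] by blast
  obtain N1 where N1: "coeff_poly M N1" "\<forall>p. \<Delta> p \<noteq> 0 \<longrightarrow> f p * \<Delta> p ^ (max k1 k2) = N1 p"
    using k1 by (meson max.cobounded1)
  obtain N2 where N2: "coeff_poly M N2" "\<forall>p. \<Delta> p \<noteq> 0 \<longrightarrow> g p * \<Delta> p ^ (max k1 k2) = N2 p"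
    using k2 by (meson max.cobounded2)
  show ?thesis unfolding rat_on_def
    by (rule exI[of _ "\<lambda>p. N1 p + N2 p"], rule exI[of _ "max k1 k2"])
       (use N1 N2 in \<open>auto intro: coeff_poly.add simp: distrib_right\<close>)
qed

lemma rat_on_mult:
  assumes "rat_on M \<Delta> f" "rat_on M \<Delta> g"
  shows "rat_on M \<Delta> (\<lambda>p. f p * g p)"
proof -
  obtain N1 k1 where N1: "coeff_poly M N1" "\<forall>p. \<Delta> p \<noteq> 0 \<longrightarrow> f p * \<Delta> p ^ k1 = N1 p"
    using assms(1) unfolding rat_on_def by blast
  obtain N2 k2 where N2: "coeff_poly M N2" "\<forall>p. \<Delta> p \<noteq> 0 \<longrightarrow> g p * \<Delta> p ^ k2 = N2 p"
    using assms(2) unfolding rat_on_def by blast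
  show ?thesis unfolding rat_on_def
  proof (rule exI[of _ "\<lambda>p. N1 p * N2 p"], rule exI[of _ "k1 + k2"], intro conjI allI impI)
    show "coeff_poly M (\<lambda>p. N1 p * N2 p)" using N1 N2 by (auto intro: coeff_poly.mult)
    fix p assume "\<Delta> p \<noteq> 0"
    then show "f p * g p * \<Delta> p ^ (k1 + k2) = N1 p * N2 p"
      using N1(2) N2(2) by (auto simp: power_add) (metis mult.assoc mult.left_commute)
  qed
qed

lemma rat_on_const: "rat_on M \<Delta> (\<lambda>p. c)"
  by (rule rat_on_poly) (rule coeff_poly.const)

lemma rat_on_coord: "\<alpha> \<in> M \<Longrightarrow> rat_on M \<Delta> (\<lambda>p. p \<alpha>)"
  by (rule rat_on_poly) (rule coeff_poly.coord)

lemma rat_on_neg: "rat_on M \<Delta> f \<Longrightarrow> rat_on M \<Delta> (\<lambda>p. - f p)"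
proof -
  assume f: "rat_on M \<Delta> f"
  have "rat_on M \<Delta> (\<lambda>p. (-1) * f p)" by (rule rat_on_mult[OF rat_on_const f])
  then show ?thesis by simp
qed

lemma rat_on_sub: "coeff_poly M \<Delta> \<Longrightarrow> rat_on M \<Delta> f \<Longrightarrow> rat_on M \<Delta> g \<Longrightarrow> rat_on M \<Delta> (\<lambda>p. f p - g p)"
proof -
  assume D: "coeff_poly M \<Delta>" and f: "rat_on M \<Delta> f" and g: "rat_on M \<Delta> g"
  have "rat_on M \<Delta> (\<lambda>p. f p + - g p)" by (rule rat_on_add[OF D f rat_on_neg[OF g]])
  then show ?thesis by simp
qed

lemma rat_on_power: "rat_on M \<Delta> f \<Longrightarrow> rat_on M \<Delta> (\<lambda>p. f p ^ k)"
  by (induction k) (auto intro: rat_on_mult rat_on_const)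

lemma rat_on_sum:
  assumes "coeff_poly M \<Delta>" "finite J" "\<And>j. j \<in> J \<Longrightarrow> rat_on M \<Delta> (f j)"
  shows "rat_on M \<Delta> (\<lambda>p. \<Sum>j\<in>J. f j p)"
  using assms(2,3)
proof (induction J rule: finite_induct)
  case empty then show ?case by (simp add: rat_on_const)
next
  case (insert x F) then show ?case by (simp add: rat_on_add assms(1))
qed

lemma rat_on_prod: "finite J \<Longrightarrow> (\<And>j. j \<in> J \<Longrightarrow> rat_on M \<Delta> (f j)) \<Longrightarrow> rat_on M \<Delta> (\<lambda>p. \<Prod>j\<in>J. f j p)"
  by (induction J rule: finite_induct) (auto intro: rat_on_mult rat_on_const)

lemma rat_on_comp:
  assumes "coeff_poly M \<Delta>" "coeff_poly M' F" "\<And>\<beta>. \<beta> \<in> M' \<Longrightarrow> rat_on M \<Delta> (\<lambda>p. R p \<beta>)"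
  shows "rat_on M \<Delta> (\<lambda>p. F (R p))"
  using assms(2,3) by (induction rule: coeff_poly.induct) (auto intro: rat_on_add rat_on_mult rat_on_const assms(1))

lemma rat_on_ext:
  assumes "rat_on M \<Delta> g" "coeff_poly M E"
  shows "rat_on M (\<lambda>p. \<Delta> p * E p) g"
proof -
  obtain N k where N: "coeff_poly M N" "\<forall>p. \<Delta> p \<noteq> 0 \<longrightarrow> g p * \<Delta> p ^ k = N p"
    using assms(1) unfolding rat_on_def by blast
  show ?thesis unfolding rat_on_def
    by (rule exI[of _ "\<lambda>p. N p * E p ^ k"], rule exI[of _ k])
       (use N assms(2) in \<open>auto intro: coeff_poly.mult cp_power simp: power_mult_distrib\<close>)
qed

lemma rat_on_div:
  assumes "coeff_poly M \<Delta>" "rat_on M \<Delta> g" "coeff_poly M Nh" "\<And>p. \<Delta> p \<noteq> 0 \<Longrightarrow> h p * \<Delta> p ^ kh = Nh p"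
  shows "rat_on M (\<lambda>p. \<Delta> p * Nh p) (\<lambda>p. g p / h p)"
proof -
  obtain N k where N: "coeff_poly M N" "\<forall>p. \<Delta> p \<noteq> 0 \<longrightarrow> g p * \<Delta> p ^ k = N p"
    using assms(2) unfolding rat_on_def by blast
  show ?thesis unfolding rat_on_def
  proof (rule exI[of _ "\<lambda>p. N p * \<Delta> p ^ (kh + 1) * Nh p ^ k"], rule exI[of _ "k + 1"], intro conjI allI impI)
    show "coeff_poly M (\<lambda>p. N p * \<Delta> p ^ (kh + 1) * Nh p ^ k)"
      using N assms by (auto intro!: coeff_poly.mult cp_power)
    fix p assume nz: "\<Delta> p * Nh p \<noteq> 0"
    then have d: "\<Delta> p \<noteq> 0" and nh: "Nh p \<noteq> 0" by auto
    have hh: "h p = Nh p / \<Delta> p ^ kh" using assms(4)[OF d] d by (simp add: field_simps)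
    have gg: "g p = N p / \<Delta> p ^ k" using N(2) d by (simp add: field_simps)
    show "g p / h p * (\<Delta> p * Nh p) ^ (k + 1) = N p * \<Delta> p ^ (kh + 1) * Nh p ^ k"
      using d nh by (simp add: hh gg field_simps power_add power_mult_distrib)
  qed
qed


lemma sum_upd: "finite A \<Longrightarrow> i \<in> A \<Longrightarrow> (\<Sum>j\<in>A. (\<alpha>(i := x)) j) + \<alpha> i = (\<Sum>j\<in>A. \<alpha> j) + (x::nat)"
proof -
  assume A: "finite A" "i \<in> A"
  have "(\<Sum>j\<in>A. (\<alpha>(i := x)) j) = x + (\<Sum>j\<in>A-{i}. (\<alpha>(i := x)) j)" using A by (simp add: sum.remove)
  also have "(\<Sum>j\<in>A-{i}. (\<alpha>(i := x)) j) = (\<Sum>j\<in>A-{i}. \<alpha> j)" by (rule sum.cong) auto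
  finally show ?thesis using A by (simp add: sum.remove)
qed

lemma prod_upd: "finite A \<Longrightarrow> i \<in> A \<Longrightarrow> (\<Prod>j\<in>A. F j ((\<alpha>(i := x)) j)) = F i x * (\<Prod>j\<in>A-{i}. F j (\<alpha> j))"
proof -
  assume A: "finite A" "i \<in> A"
  have "(\<Prod>j\<in>A. F j ((\<alpha>(i := x)) j)) = F i x * (\<Prod>j\<in>A-{i}. F j ((\<alpha>(i := x)) j))" using A by (simp add: prod.remove)
  also have "(\<Prod>j\<in>A-{i}. F j ((\<alpha>(i := x)) j)) = (\<Prod>j\<in>A-{i}. F j (\<alpha> j))" by (rule prod.cong) auto
  finally show ?thesis .
qed

lemma prod_upd2: "finite A \<Longrightarrow> i \<in> A \<Longrightarrow> (\<Prod>j\<in>A. F j ((\<alpha>(i := x)) j)) * F i (\<alpha> i) = F i x * (\<Prod>j\<in>A. F j (\<alpha> j))"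
proof -
  assume A: "finite A" "i \<in> A"
  have "(\<Prod>j\<in>A. F j ((\<alpha>(i := x)) j)) * F i (\<alpha> i) = F i x * (\<Prod>j\<in>A-{i}. F j (\<alpha> j)) * F i (\<alpha> i)"
    by (subst prod_upd[OF A]) (rule refl)
  also have "\<dots> = F i x * (\<Prod>j\<in>A. F j (\<alpha> j))"
    using A by (simp add: prod.remove[of A i "\<lambda>j. F j (\<alpha> j)"] mult_ac)
  finally show ?thesis .
qed

definition mcoef :: "nat \<Rightarrow> nat \<Rightarrow> (nat \<Rightarrow> nat) \<Rightarrow> complex" where
  "mcoef n d \<alpha> = of_nat (fact d) / (\<Prod>i<n. of_nat (fact (\<alpha> i)))"

definition pow_coeffs :: "nat \<Rightarrow> nat \<Rightarrow> (nat \<Rightarrow> complex) \<Rightarrow> (nat \<Rightarrow> nat) \<Rightarrow> complex" where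
  "pow_coeffs n d a \<alpha> = (if \<alpha> \<in> monoms n d then mcoef n d \<alpha> * (\<Prod>i<n. a i ^ \<alpha> i) else 0)"

lemma prod_fact_nz: "(\<Prod>i<n. (of_nat (fact ((\<alpha>::nat\<Rightarrow>nat) i)) :: complex)) \<noteq> 0"
  by (induction n) auto

lemma upd_monoms: "\<alpha> \<in> monoms n d \<Longrightarrow> i < n \<Longrightarrow> \<alpha>(i := Suc (\<alpha> i)) \<in> monoms n (Suc d)"
  unfolding monoms_def using sum_upd[of "{..<n}" i \<alpha> "Suc (\<alpha> i)"] by auto

lemma down_monoms: "\<beta> \<in> monoms n (Suc d) \<Longrightarrow> i < n \<Longrightarrow> 0 < \<beta> i \<Longrightarrow> \<beta>(i := \<beta> i - 1) \<in> monoms n d"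
  unfolding monoms_def using sum_upd[of "{..<n}" i \<beta> "\<beta> i - 1"] by auto

lemmas down_monoms' = down_monoms[simplified]

lemma monoms_0: "monoms n 0 = {\<lambda>_. 0}"
proof -
  have "\<alpha> = (\<lambda>_. 0)" if "\<alpha> \<in> monoms n 0" for \<alpha>
  proof
    fix x show "\<alpha> x = 0" using that by (cases "x < n") (auto simp: monoms_def)
  qed
  then show ?thesis by (auto simp: monoms_def)
qed

lemma mcoef_up:
  assumes "i < n"
  shows "of_nat (Suc (\<beta> i)) * mcoef n (Suc e) (\<beta>(i := Suc (\<beta> i))) = of_nat (Suc e) * mcoef n e \<beta>"
proof -
  define B where "B = \<beta>(i := Suc (\<beta> i))"
  define F where "F = (\<lambda>(j::nat) x. (of_nat (fact x) :: complex))"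
  define PB where "PB = (\<Prod>j<n. F j (B j))"
  define P where "P = (\<Prod>j<n. F j (\<beta> j))"
  have iA: "i \<in> {..<n}" using assms by simp
  have h: "PB * F i (\<beta> i) = F i (Suc (\<beta> i)) * P"
    unfolding PB_def P_def B_def by (rule prod_upd2[OF finite_lessThan iA])
  have hF: "F i (Suc (\<beta> i)) = of_nat (Suc (\<beta> i)) * F i (\<beta> i)" unfolding F_def
    by (simp only: fact_Suc of_nat_mult of_nat_id)
  have nz: "F i (\<beta> i) \<noteq> 0" unfolding F_def by simp
  have "PB * F i (\<beta> i) = (of_nat (Suc (\<beta> i)) * P) * F i (\<beta> i)" using h hF by (simp add: mult_ac)
  then have P': "PB = of_nat (Suc (\<beta> i)) * P" using nz by simp
  have Pnz: "P \<noteq> 0" unfolding P_def F_def by (rule prod_fact_nz)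
  have m1: "mcoef n (Suc e) B = of_nat (fact (Suc e)) / PB" unfolding mcoef_def PB_def F_def by simp
  have m2: "mcoef n e \<beta> = of_nat (fact e) / P" unfolding mcoef_def P_def F_def by simp
  have "of_nat (Suc (\<beta> i)) * mcoef n (Suc e) B = of_nat (fact (Suc e)) / P"
    unfolding m1 P' using Pnz by (simp del: of_nat_Suc fact_Suc)
  also have "\<dots> = of_nat (Suc e) * mcoef n e \<beta>"
  proof -
    have "(of_nat (fact (Suc e)) :: complex) = of_nat (Suc e) * of_nat (fact e)" by (simp only: fact_Suc of_nat_mult of_nat_id)
    then show ?thesis unfolding m2 by (simp only: times_divide_eq_right)
  qed
  finally show ?thesis unfolding B_def .
qed

lemma mcoef_step:
  assumes "\<beta> \<in> monoms n (Suc d)"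
  shows "(\<Sum>i\<in>{i. i < n \<and> 0 < \<beta> i}. mcoef n d (\<beta>(i := \<beta> i - 1))) = mcoef n (Suc d) \<beta>"
proof -
  have key: "mcoef n d (\<beta>(i := \<beta> i - 1)) = of_nat (\<beta> i) * mcoef n (Suc d) \<beta> / of_nat (Suc d)" if i: "i < n" "0 < \<beta> i" for i
  proof -
    define B where "B = \<beta>(i := \<beta> i - 1)"
    have BB: "B(i := Suc (B i)) = \<beta>" "Suc (B i) = \<beta> i" using i by (auto simp: B_def)
    have "of_nat (Suc (B i)) * mcoef n (Suc d) (B(i := Suc (B i))) = of_nat (Suc d) * mcoef n d B"
      by (rule mcoef_up[OF i(1)])
    then have "of_nat (\<beta> i) * mcoef n (Suc d) \<beta> = of_nat (Suc d) * mcoef n d B" unfolding BB(1) unfolding BB(2) .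
    then show ?thesis unfolding B_def[symmetric]
      by (metis nonzero_mult_div_cancel_left of_nat_eq_0_iff nat.distinct(1))
  qed
  have "(\<Sum>i\<in>{i. i < n \<and> 0 < \<beta> i}. mcoef n d (\<beta>(i := \<beta> i - 1)))
      = (\<Sum>i\<in>{i. i < n \<and> 0 < \<beta> i}. of_nat (\<beta> i) * mcoef n (Suc d) \<beta> / of_nat (Suc d))"
    by (rule sum.cong[OF refl], rule key) auto
  also have "\<dots> = (\<Sum>i<n. of_nat (\<beta> i) * mcoef n (Suc d) \<beta> / of_nat (Suc d))"
    by (rule sum.mono_neutral_left) auto
  also have "\<dots> = of_nat (\<Sum>i<n. \<beta> i) * mcoef n (Suc d) \<beta> / of_nat (Suc d)"
    by (simp only: sum_divide_distrib[symmetric] sum_distrib_right[symmetric] of_nat_sum)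
  also have "\<dots> = mcoef n (Suc d) \<beta>"
    using assms by (simp add: monoms_def del: of_nat_Suc)
  finally show ?thesis .
qed

theorem multinomial:
  fixes y :: "nat \<Rightarrow> complex"
  shows "(\<Sum>i<n. y i) ^ d = (\<Sum>\<alpha>\<in>monoms n d. mcoef n d \<alpha> * (\<Prod>i<n. y i ^ \<alpha> i))"
proof (induction d)
  case 0
  then show ?case by (simp add: monoms_0 mcoef_def)
next
  case (Suc d)
  let ?M = "monoms n d" and ?M' = "monoms n (Suc d)"
  let ?T = "Sigma ?M' (\<lambda>\<beta>. {i. i < n \<and> 0 < \<beta> i})"
  have "(\<Sum>i<n. y i) ^ Suc d = (\<Sum>\<alpha>\<in>?M. \<Sum>i<n. mcoef n d \<alpha> * (\<Prod>j<n. y j ^ \<alpha> j) * y i)"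
  proof -
    have "(\<Sum>i<n. y i) ^ Suc d = (\<Sum>\<alpha>\<in>?M. mcoef n d \<alpha> * (\<Prod>j<n. y j ^ \<alpha> j)) * (\<Sum>i<n. y i)"
      by (simp only: power_Suc2 Suc)
    also have "\<dots> = (\<Sum>\<alpha>\<in>?M. mcoef n d \<alpha> * (\<Prod>j<n. y j ^ \<alpha> j) * (\<Sum>i<n. y i))"
      by (rule sum_distrib_right)
    also have "\<dots> = (\<Sum>\<alpha>\<in>?M. \<Sum>i<n. mcoef n d \<alpha> * (\<Prod>j<n. y j ^ \<alpha> j) * y i)"
      by (simp only: sum_distrib_left)
    finally show ?thesis .
  qed
  also have "\<dots> = (\<Sum>(\<alpha>,i)\<in>?M \<times> {..<n}. mcoef n d \<alpha> * (\<Prod>j<n. y j ^ \<alpha> j) * y i)"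
    by (simp add: sum.cartesian_product)
  also have "\<dots> = (\<Sum>(\<beta>,i)\<in>?T. mcoef n d (\<beta>(i := \<beta> i - 1)) * (\<Prod>j<n. y j ^ \<beta> j))"
  proof -
    define inc :: "(nat \<Rightarrow> nat) \<times> nat \<Rightarrow> (nat \<Rightarrow> nat) \<times> nat" where "inc = (\<lambda>(\<alpha>,i). (\<alpha>(i := Suc (\<alpha> i)), i))"
    define dec :: "(nat \<Rightarrow> nat) \<times> nat \<Rightarrow> (nat \<Rightarrow> nat) \<times> nat" where "dec = (\<lambda>(\<beta>,i). (\<beta>(i := \<beta> i - 1), i))"
    define G where "G = (\<lambda>(\<alpha>,i). mcoef n d \<alpha> * (\<Prod>j<n. y j ^ \<alpha> j) * y i)"
    define H where "H = (\<lambda>(\<beta>,i). mcoef n d (\<beta>(i := \<beta> i - 1)) * (\<Prod>j<n. y j ^ \<beta> j))"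
    have w1: "dec (inc a) = a" if "a \<in> ?M \<times> {..<n}" for a
      using that by (cases a) (simp add: inc_def dec_def)
    have w2: "inc a \<in> ?T" if "a \<in> ?M \<times> {..<n}" for a
      using that by (cases a) (auto simp: inc_def intro: upd_monoms)
    have w3: "inc (dec b) = b" if "b \<in> ?T" for b
      using that by (cases b) (auto simp: inc_def dec_def)
    have w4: "dec b \<in> ?M \<times> {..<n}" if "b \<in> ?T" for b
      using that by (cases b) (auto simp: dec_def intro: down_monoms')
    have w5: "H (inc a) = G a" if "a \<in> ?M \<times> {..<n}" for a
    proof -
      obtain \<alpha> i where a: "a = (\<alpha>, i)" by (cases a)
      have i: "i < n" using that a by auto
      have iA: "i \<in> {..<n}" using i by simp
      have "(\<Prod>j<n. y j ^ (\<alpha>(i := Suc (\<alpha> i))) j) = y i ^ Suc (\<alpha> i) * (\<Prod>j\<in>{..<n}-{i}. y j ^ \<alpha> j)"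
        by (rule prod_upd[OF finite_lessThan iA])
      also have "\<dots> = y i * (\<Prod>j<n. y j ^ \<alpha> j)"
        using i by (simp add: prod.remove[of "{..<n}" i "\<lambda>j. y j ^ \<alpha> j"])
      finally have pp: "(\<Prod>j<n. y j ^ (\<alpha>(i := Suc (\<alpha> i))) j) = y i * (\<Prod>j<n. y j ^ \<alpha> j)" .
      have "(\<alpha>(i := Suc (\<alpha> i)))(i := (\<alpha>(i := Suc (\<alpha> i))) i - 1) = \<alpha>" by simp
      then show ?thesis unfolding a inc_def H_def G_def using pp by (simp add: mult_ac)
    qed
    have "sum G (?M \<times> {..<n}) = sum H ?T"
      by (rule sum.reindex_bij_witness[of "?M \<times> {..<n}" dec inc ?T H G]) (use w1 w2 w3 w4 w5 in auto)
    then show ?thesis unfolding G_def H_def .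
  qed
  also have "\<dots> = (\<Sum>\<beta>\<in>?M'. \<Sum>i\<in>{i. i < n \<and> 0 < \<beta> i}. mcoef n d (\<beta>(i := \<beta> i - 1)) * (\<Prod>j<n. y j ^ \<beta> j))"
  proof -
    have fin: "\<forall>\<beta>\<in>?M'. finite {i. i < n \<and> 0 < \<beta> i}" by simp
    show ?thesis by (rule sum.Sigma[OF monoms_finite fin, symmetric])
  qed
  also have "\<dots> = (\<Sum>\<beta>\<in>?M'. mcoef n (Suc d) \<beta> * (\<Prod>j<n. y j ^ \<beta> j))"
  proof (rule sum.cong[OF refl])
    fix \<beta> assume b: "\<beta> \<in> ?M'"
    show "(\<Sum>i\<in>{i. i < n \<and> 0 < \<beta> i}. mcoef n d (\<beta>(i := \<beta> i - 1)) * (\<Prod>j<n. y j ^ \<beta> j)) = mcoef n (Suc d) \<beta> * (\<Prod>j<n. y j ^ \<beta> j)"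
      unfolding sum_distrib_right[symmetric] mcoef_step[OF b] ..
  qed
  finally show ?case .
qed


lemma eval_pow_coeffs: "eval_form n d (pow_coeffs n d a) x = (\<Sum>i<n. a i * x i) ^ d"
proof -
  have "(\<Sum>i<n. a i * x i) ^ d = (\<Sum>\<alpha>\<in>monoms n d. mcoef n d \<alpha> * (\<Prod>i<n. (a i * x i) ^ \<alpha> i))"
    by (rule multinomial[of "\<lambda>i. a i * x i" n d])
  also have "\<dots> = eval_form n d (pow_coeffs n d a) x"
    unfolding eval_form_def
  proof (rule sum.cong[OF refl])
    fix \<alpha> assume a: "\<alpha> \<in> monoms n d"
    have "(\<Prod>i<n. (a i * x i) ^ \<alpha> i) = (\<Prod>i<n. a i ^ \<alpha> i) * (\<Prod>i<n. x i ^ \<alpha> i)"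
    proof -
      have "(\<Prod>i<n. (a i * x i) ^ \<alpha> i) = (\<Prod>i<n. a i ^ \<alpha> i * x i ^ \<alpha> i)"
        by (rule prod.cong[OF refl]) (rule power_mult_distrib)
      also have "\<dots> = (\<Prod>i<n. a i ^ \<alpha> i) * (\<Prod>i<n. x i ^ \<alpha> i)"
        by (rule prod.distrib)
      finally show ?thesis .
    qed
    moreover have "pow_coeffs n d a \<alpha> = mcoef n d \<alpha> * (\<Prod>i<n. a i ^ \<alpha> i)"
      using a by (simp add: pow_coeffs_def)
    ultimately show "mcoef n d \<alpha> * (\<Prod>i<n. (a i * x i) ^ \<alpha> i) = pow_coeffs n d a \<alpha> * (\<Prod>i<n. x i ^ \<alpha> i)"
      by (simp only: mult.assoc)
  qed
  finally show ?thesis by (rule sym)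
qed


definition Dop :: "nat \<Rightarrow> nat \<Rightarrow> nat \<Rightarrow> ((nat \<Rightarrow> nat) \<Rightarrow> complex) \<Rightarrow> (nat \<Rightarrow> nat) \<Rightarrow> complex" where
  "Dop n c e p \<beta> = (if \<beta> \<in> monoms n e then
     of_nat (Suc (\<beta> (n-1))) * p (\<beta>(n-1 := Suc (\<beta> (n-1)))) + of_nat c * of_nat (Suc (\<beta> 0)) * p (\<beta>(0 := Suc (\<beta> 0)))
   else 0)"

lemma prod_pow_up: "(i::nat) < n \<Longrightarrow> (\<Prod>j<n. a j ^ (\<beta>(i := Suc (\<beta> i))) j) = a i * (\<Prod>j<n. (a j :: complex) ^ \<beta> j)"
proof -
  assume i: "i < n"
  have iA: "i \<in> {..<n}" using i by simp
  have "(\<Prod>j<n. a j ^ (\<beta>(i := Suc (\<beta> i))) j) = a i ^ Suc (\<beta> i) * (\<Prod>j\<in>{..<n}-{i}. a j ^ \<beta> j)"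
    by (rule prod_upd[of "{..<n}" i "\<lambda>j x. a j ^ x" \<beta> "Suc (\<beta> i)", OF finite_lessThan iA])
  also have "\<dots> = a i * (\<Prod>j<n. a j ^ \<beta> j)"
    using i by (simp add: prod.remove[of "{..<n}" i "\<lambda>j. a j ^ \<beta> j"])
  finally show ?thesis .
qed

lemma pow_coeffs_up:
  assumes "\<beta> \<in> monoms n e" "i < n"
  shows "of_nat (Suc (\<beta> i)) * pow_coeffs n (Suc e) a (\<beta>(i := Suc (\<beta> i))) = of_nat (Suc e) * a i * pow_coeffs n e a \<beta>"
proof -
  define B where "B = \<beta>(i := Suc (\<beta> i))"
  have m: "B \<in> monoms n (Suc e)" unfolding B_def using upd_monoms[OF assms] .
  have pp: "(\<Prod>j<n. a j ^ B j) = a i * (\<Prod>j<n. a j ^ \<beta> j)" unfolding B_def by (rule prod_pow_up[OF assms(2)])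
  have mc: "of_nat (Suc (\<beta> i)) * mcoef n (Suc e) B = of_nat (Suc e) * mcoef n e \<beta>"
    unfolding B_def by (rule mcoef_up[OF assms(2)])
  have "of_nat (Suc (\<beta> i)) * pow_coeffs n (Suc e) a B
      = (of_nat (Suc (\<beta> i)) * mcoef n (Suc e) B) * (a i * (\<Prod>j<n. a j ^ \<beta> j))"
    using m by (simp only: pow_coeffs_def if_True pp mult.assoc)
  also have "\<dots> = of_nat (Suc e) * a i * pow_coeffs n e a \<beta>"
    unfolding mc using assms(1) by (simp add: pow_coeffs_def mult_ac)
  finally show ?thesis unfolding B_def .
qed

lemma Dop_pow:
  assumes "2 \<le> n"
  shows "Dop n c e (pow_coeffs n (Suc e) a) \<beta> = of_nat (Suc e) * (a (n-1) + of_nat c * a 0) * pow_coeffs n e a \<beta>"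
proof (cases "\<beta> \<in> monoms n e")
  case True
  have nl: "n - 1 < n" "0 < n" using assms by auto
  have hl: "of_nat (Suc (\<beta> (n-1))) * pow_coeffs n (Suc e) a (\<beta>(n-1 := Suc (\<beta> (n-1)))) = of_nat (Suc e) * a (n-1) * pow_coeffs n e a \<beta>"
    by (rule pow_coeffs_up[OF True nl(1)])
  have h0: "of_nat (Suc (\<beta> 0)) * pow_coeffs n (Suc e) a (\<beta>(0 := Suc (\<beta> 0))) = of_nat (Suc e) * a 0 * pow_coeffs n e a \<beta>"
    by (rule pow_coeffs_up[OF True nl(2)])
  have "Dop n c e (pow_coeffs n (Suc e) a) \<beta> = of_nat (Suc (\<beta> (n-1))) * pow_coeffs n (Suc e) a (\<beta>(n-1 := Suc (\<beta> (n-1))))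
     + of_nat c * (of_nat (Suc (\<beta> 0)) * pow_coeffs n (Suc e) a (\<beta>(0 := Suc (\<beta> 0))))"
    unfolding Dop_def using True by (simp only: if_True mult.assoc)
  also have "\<dots> = of_nat (Suc e) * a (n-1) * pow_coeffs n e a \<beta> + of_nat c * (of_nat (Suc e) * a 0 * pow_coeffs n e a \<beta>)"
    unfolding hl h0 ..
  finally show ?thesis by (simp add: algebra_simps)
next
  case False then show ?thesis by (simp add: Dop_def pow_coeffs_def)
qed

lemma Dop_sum: "finite J \<Longrightarrow> Dop n c e (\<lambda>\<alpha>. \<Sum>j\<in>J. f j \<alpha>) \<beta> = (\<Sum>j\<in>J. Dop n c e (f j) \<beta>)"
  by (simp add: Dop_def sum.distrib sum_distrib_left)

lemma Dop_diff: "Dop n c e (\<lambda>\<alpha>. f \<alpha> - g \<alpha>) \<beta> = Dop n c e f \<beta> - Dop n c e g \<beta>"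
  by (simp add: Dop_def algebra_simps)

lemma monoms_sub: "1 \<le> n \<Longrightarrow> monoms (n-1) d \<subseteq> monoms n d"
proof
  fix \<alpha> assume n: "1 \<le> n" and a: "\<alpha> \<in> monoms (n-1) d"
  obtain m where m: "n = Suc m" using n by (cases n) auto
  show "\<alpha> \<in> monoms n d" using a by (auto simp: monoms_def m)
qed

lemma monoms_last0: "1 \<le> n \<Longrightarrow> \<alpha> \<in> monoms n d \<Longrightarrow> \<alpha> (n-1) = 0 \<Longrightarrow> \<alpha> \<in> monoms (n-1) d"
proof -
  assume n: "1 \<le> n" and a: "\<alpha> \<in> monoms n d" "\<alpha> (n-1) = 0"
  obtain m where m: "n = Suc m" using n by (cases n) auto
  have z: "\<alpha> i = 0" if "m \<le> i" for i
  proof (cases "i = m")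
    case True then show ?thesis using a m by simp
  next
    case False then have "n \<le> i" using that m by simp
    then show ?thesis using a by (simp add: monoms_def)
  qed
  have "(\<Sum>i<m. \<alpha> i) = (\<Sum>i<n. \<alpha> i)" using a m by simp
  then show ?thesis using a z unfolding monoms_def m by simp
qed

lemma monoms_sub_last: "\<alpha> \<in> monoms (n-1) d \<Longrightarrow> \<alpha> (n-1) = 0"
  by (simp add: monoms_def)

lemma Dop_inj:
  assumes n: "2 \<le> n" and D: "\<And>\<beta>. \<beta> \<in> monoms n e \<Longrightarrow> Dop n c e g \<beta> = 0"
    and R: "\<And>\<alpha>. \<alpha> \<in> monoms (n-1) (Suc e) \<Longrightarrow> g \<alpha> = 0"
  shows "\<alpha> \<in> monoms n (Suc e) \<Longrightarrow> g \<alpha> = 0"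
proof -
  have "\<forall>\<alpha>\<in>monoms n (Suc e). \<alpha> (n-1) = k \<longrightarrow> g \<alpha> = 0" for k
  proof (induction k rule: less_induct)
    case (less k)
    show ?case
    proof (intro ballI impI)
      fix \<alpha> assume a: "\<alpha> \<in> monoms n (Suc e)" and k: "\<alpha> (n-1) = k"
      show "g \<alpha> = 0"
      proof (cases k)
        case 0
        then show ?thesis using R monoms_last0[of n \<alpha> "Suc e"] a k n by auto
      next
        case (Suc k')
        let ?\<beta> = "\<alpha>(n-1 := k')"
        have nl: "n - 1 < n" "0 < n" "n - 1 \<noteq> 0" using n by auto
        have b: "?\<beta> \<in> monoms n e" using down_monoms'[OF a nl(1)] k Suc by simp
        have b1: "?\<beta>(n-1 := Suc (?\<beta> (n-1))) = \<alpha>" using k Suc by auto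
        have b2m: "?\<beta>(0 := Suc (?\<beta> 0)) \<in> monoms n (Suc e)" by (rule upd_monoms[OF b nl(2)])
        have "(?\<beta>(0 := Suc (?\<beta> 0))) (n-1) = k'" using nl(3) by simp
        moreover have lt: "k' < k" using Suc by simp
        ultimately have b2: "g (?\<beta>(0 := Suc (?\<beta> 0))) = 0" using less[OF lt] b2m by blast
        have "Dop n c e g ?\<beta> = 0" by (rule D[OF b])
        then have "of_nat (Suc k') * g \<alpha> = 0" using b b1 b2 by (simp add: Dop_def)
        then show ?thesis by (simp only: mult_eq_0_iff of_nat_eq_0_iff Suc_not_Zero simp_thms)
      qed
    qed
  qed
  then show "\<alpha> \<in> monoms n (Suc e) \<Longrightarrow> g \<alpha> = 0" by blast
qed

lemma pow_coeffs_restrict: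
  assumes "1 \<le> n" "\<alpha> \<in> monoms (n-1) d" "\<And>i. i < n - 1 \<Longrightarrow> b i = a i"
  shows "pow_coeffs n d b \<alpha> = pow_coeffs (n-1) d a \<alpha>"
proof -
  obtain m where m: "n = Suc m" using assms(1) by (cases n) auto
  have a0: "\<alpha> m = 0" using assms(2) by (simp add: monoms_def m)
  have mem: "\<alpha> \<in> monoms n d" using monoms_sub[OF assms(1)] assms(2) by auto
  have "(\<Prod>i<m. b i ^ \<alpha> i) = (\<Prod>i<m. a i ^ \<alpha> i)" by (rule prod.cong) (use assms(3) m in auto)
  then show ?thesis using mem assms(2) a0 by (simp add: pow_coeffs_def mcoef_def m)
qed

definition extf :: "nat \<Rightarrow> nat \<Rightarrow> (nat \<Rightarrow> complex) \<Rightarrow> nat \<Rightarrow> complex" where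
  "extf n c a = a(n-1 := - of_nat c * a 0)"

lemma Dop_pow_ext:
  assumes "2 \<le> n"
  shows "Dop n c e (pow_coeffs n (Suc e) (extf n c a)) \<beta> = 0"
  using assms by (simp add: Dop_pow extf_def)

lemma pow_ext_restrict:
  assumes "2 \<le> n" "\<alpha> \<in> monoms (n-1) d"
  shows "pow_coeffs n d (extf n c a) \<alpha> = pow_coeffs (n-1) d a \<alpha>"
  by (rule pow_coeffs_restrict) (use assms in \<open>auto simp: extf_def\<close>)


definition NN :: "nat \<Rightarrow> nat \<Rightarrow> nat" where "NN n d = ((n + d) - 2) choose (d - 1)"

definition good_rep :: "nat \<Rightarrow> nat \<Rightarrow> nat \<Rightarrow> ((nat \<Rightarrow> nat) \<Rightarrow> complex) \<Rightarrow> (nat \<Rightarrow> complex) \<Rightarrow> (nat \<Rightarrow> nat \<Rightarrow> complex) \<Rightarrow> bool" where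
  "good_rep n d D p C A \<longleftrightarrow>
     (\<forall>\<alpha>\<in>monoms n d. p \<alpha> = (\<Sum>j<NN n d. C j * pow_coeffs n d (A j) \<alpha>)) \<and>
     (\<forall>j<NN n d. A j 0 \<noteq> 0 \<and> (\<forall>e. d < e \<and> e \<le> D \<longrightarrow> A j (n-1) + of_nat e * A j 0 \<noteq> 0))"

definition claim :: "nat \<Rightarrow> nat \<Rightarrow> nat \<Rightarrow> bool" where
  "claim n d D \<longleftrightarrow> (\<exists>\<Delta> C A. coeff_poly (monoms n d) \<Delta> \<and> (\<exists>p\<in>forms n d. \<Delta> p \<noteq> 0) \<and>
     (\<forall>j. rat_on (monoms n d) \<Delta> (\<lambda>p. C p j)) \<and> (\<forall>j i. rat_on (monoms n d) \<Delta> (\<lambda>p. A p j i)) \<and>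
     (\<forall>p\<in>forms n d. \<Delta> p \<noteq> 0 \<longrightarrow> good_rep n d D p (C p) (A p)))"

lemma sum_split_add: "(\<Sum>j<a+(b::nat). f j) = (\<Sum>j<a. f j) + (\<Sum>k<b. f (a + k))"
  by (induction b) (simp_all add: add_ac)

lemma one_plus_nz: "(1::complex) + of_nat e \<noteq> 0"
  by (metis of_nat_Suc of_nat_eq_0_iff Zero_not_Suc)

lemma monoms_1_0: "monoms (Suc 0) d = {\<lambda>i. if i = 0 then d else 0}"
proof
  show "monoms (Suc 0) d \<subseteq> {\<lambda>i. if i = 0 then d else 0}"
  proof
    fix \<alpha> assume a: "\<alpha> \<in> monoms (Suc 0) d"
    have "\<alpha> = (\<lambda>i. if i = 0 then d else 0)"
    proof
      fix i show "\<alpha> i = (if i = 0 then d else 0)" using a by (cases i) (auto simp: monoms_def)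
    qed
    then show "\<alpha> \<in> {\<lambda>i. if i = 0 then d else 0}" by simp
  qed
  show "{\<lambda>i. if i = 0 then d else 0} \<subseteq> monoms (Suc 0) d" by (auto simp: monoms_def)
qed

lemma claim_n1: "claim (Suc 0) d D"
proof -
  define a1 where "a1 = (\<lambda>i::nat. if i = 0 then d else 0)"
  have M: "monoms (Suc 0) d = {a1}" unfolding a1_def by (rule monoms_1_0)
  have NN1: "NN (Suc 0) d = 1" by (simp add: NN_def)
  define A where "A = (\<lambda>(p::(nat\<Rightarrow>nat)\<Rightarrow>complex) (j::nat) (i::nat). if i = 0 then (1::complex) else 0)"
  have pc: "pow_coeffs (Suc 0) d (A p j) a1 = 1" for p j
    using M by (simp add: pow_coeffs_def mcoef_def A_def a1_def)
  show ?thesis unfolding claim_def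
  proof (intro exI[of _ "\<lambda>p. 1"] exI[of _ "\<lambda>p j. p a1"] exI[of _ A] conjI allI ballI impI)
    show "coeff_poly (monoms (Suc 0) d) (\<lambda>p. 1)" by (rule coeff_poly.const)
    show "\<exists>p\<in>forms (Suc 0) d. (1::complex) \<noteq> 0" by (rule bexI[of _ "\<lambda>_. 0"]) (auto simp: forms_def)
    show "rat_on (monoms (Suc 0) d) (\<lambda>p. 1) (\<lambda>p. p a1)" for j by (rule rat_on_coord) (simp add: M)
    show "rat_on (monoms (Suc 0) d) (\<lambda>p. 1) (\<lambda>p. A p j i)" for j i by (simp add: A_def rat_on_const)
    fix p assume "p \<in> forms (Suc 0) d"
    show "good_rep (Suc 0) d D p (\<lambda>j. p a1) (A p)"
      unfolding good_rep_def NN1 using pc one_plus_nz by (auto simp: M A_def)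
  qed
qed

definition eps :: "nat \<Rightarrow> nat \<Rightarrow> nat" where "eps i = (\<lambda>j. if j = i then 1 else 0)"

lemma monoms_1: "monoms n (Suc 0) = eps ` {..<n}"
proof
  show "monoms n (Suc 0) \<subseteq> eps ` {..<n}"
  proof
    fix \<alpha> assume a: "\<alpha> \<in> monoms n (Suc 0)"
    then obtain i where i: "i \<in> {..<n}" "\<alpha> i = Suc 0" "\<forall>b\<in>{..<n}. i \<noteq> b \<longrightarrow> \<alpha> b = 0"
      unfolding monoms_def using sum_eq_Suc0_iff[of "{..<n}" \<alpha>] by auto
    have "\<alpha> = eps i"
    proof
      fix j show "\<alpha> j = eps i j"
      proof (cases "j < n")
        case True then show ?thesis using i by (auto simp: eps_def)
      next
        case False then show ?thesis using i a by (auto simp: eps_def monoms_def)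
      qed
    qed
    then show "\<alpha> \<in> eps ` {..<n}" using i by auto
  qed
next
  show "eps ` {..<n} \<subseteq> monoms n (Suc 0)"
  proof
    fix \<alpha> assume "\<alpha> \<in> eps ` {..<n}"
    then obtain i where i: "i < n" "\<alpha> = eps i" by auto
    have "(\<Sum>j<n. eps i j) = (\<Sum>j\<in>{i}. eps i j)" by (rule sum.mono_neutral_right) (auto simp: eps_def i)
    then show "\<alpha> \<in> monoms n (Suc 0)" using i by (auto simp: monoms_def eps_def)
  qed
qed

lemma pow_coeffs_eps: "i < n \<Longrightarrow> pow_coeffs n (Suc 0) a (eps i) = a i"
proof -
  assume i: "i < n"
  have m: "eps i \<in> monoms n (Suc 0)" using monoms_1 i by auto
  have "(\<Prod>j<n. a j ^ eps i j) = (\<Prod>j\<in>{i}. a j ^ eps i j)" by (rule prod.mono_neutral_right) (auto simp: eps_def i)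
  moreover have "(\<Prod>j<n. (of_nat (fact (eps i j)) :: complex)) = 1" by (rule prod.neutral) (auto simp: eps_def)
  ultimately show ?thesis using m by (simp add: pow_coeffs_def mcoef_def eps_def)
qed

lemma claim_d1:
  assumes n: "2 \<le> n"
  shows "claim n (Suc 0) D"
proof -
  have NN1: "NN n (Suc 0) = 1" by (simp add: NN_def)
  have e0: "eps 0 \<in> monoms n (Suc 0)" "eps (n-1) \<in> monoms n (Suc 0)" using n monoms_1 by auto
  have ne: "eps (n-1) \<noteq> eps 0" using n by (auto simp: eps_def fun_eq_iff)
  define \<Delta> where "\<Delta> = (\<lambda>p::(nat\<Rightarrow>nat)\<Rightarrow>complex. p (eps 0) * (\<Prod>e\<in>{Suc (Suc 0)..D}. p (eps (n-1)) + of_nat e * p (eps 0)))"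
  define A where "A = (\<lambda>(p::(nat\<Rightarrow>nat)\<Rightarrow>complex) (j::nat) (i::nat). if i < n then p (eps i) else 0)"
  show ?thesis unfolding claim_def
  proof (intro exI[of _ \<Delta>] exI[of _ "\<lambda>p j. 1"] exI[of _ A] conjI allI ballI impI)
    show "coeff_poly (monoms n (Suc 0)) \<Delta>" unfolding \<Delta>_def
      by (intro coeff_poly.mult coeff_poly.coord cp_prod coeff_poly.add coeff_poly.const e0 finite_atLeastAtMost)
    show "\<exists>p\<in>forms n (Suc 0). \<Delta> p \<noteq> 0"
    proof (rule bexI[of _ "\<lambda>\<alpha>. if \<alpha> = eps 0 then 1 else 0"])
      show "\<Delta> (\<lambda>\<alpha>. if \<alpha> = eps 0 then 1 else 0) \<noteq> 0" using ne by (simp add: \<Delta>_def)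
      show "(\<lambda>\<alpha>. if \<alpha> = eps 0 then 1 else 0) \<in> forms n (Suc 0)" using e0 by (auto simp: forms_def)
    qed
    show "rat_on (monoms n (Suc 0)) \<Delta> (\<lambda>p. 1)" for j by (rule rat_on_const)
    show "rat_on (monoms n (Suc 0)) \<Delta> (\<lambda>p. A p j i)" for j i
    proof (cases "i < n")
      case True
      then have "eps i \<in> monoms n (Suc 0)" using monoms_1 by auto
      then show ?thesis unfolding A_def using True by (simp add: rat_on_coord)
    next
      case False then show ?thesis unfolding A_def by (simp add: rat_on_const)
    qed
    fix p assume p: "p \<in> forms n (Suc 0)" and D: "\<Delta> p \<noteq> 0"
    have rep: "p \<alpha> = pow_coeffs n (Suc 0) (A p 0) \<alpha>" if am: "\<alpha> \<in> monoms n (Suc 0)" for \<alpha>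
    proof -
      obtain i where i: "i < n" "\<alpha> = eps i" using am monoms_1 by auto
      show ?thesis using i pow_coeffs_eps[OF i(1), of "A p 0"] by (simp add: A_def)
    qed
    have c1: "A p j 0 \<noteq> 0" for j using D n by (simp add: \<Delta>_def A_def)
    have c2: "A p j (n-1) + of_nat e * A p j 0 \<noteq> 0" if "Suc 0 < e" "e \<le> D" for j e
    proof -
      have "e \<in> {Suc (Suc 0)..D}" using that by auto
      then show ?thesis using D n by (auto simp: \<Delta>_def A_def prod_zero_iff)
    qed
    show "good_rep n (Suc 0) D p (\<lambda>j. 1) (A p)"
      unfolding good_rep_def NN1 using rep c1 c2 by auto
  qed
qed


lemma rat_on_pcomp:
  assumes "rat_on M' \<Delta>' g" "coeff_poly M' \<Delta>'" "\<And>\<beta>. \<beta> \<in> M' \<Longrightarrow> coeff_poly M (\<lambda>p. R p \<beta>)"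
  shows "rat_on M (\<lambda>p. \<Delta>' (R p)) (\<lambda>p. g (R p))"
proof -
  obtain N k where N: "coeff_poly M' N" "\<forall>r. \<Delta>' r \<noteq> 0 \<longrightarrow> g r * \<Delta>' r ^ k = N r"
    using assms(1) unfolding rat_on_def by blast
  show ?thesis unfolding rat_on_def
    by (rule exI[of _ "\<lambda>p. N (R p)"], rule exI[of _ k]) (use N cp_comp[OF N(1) assms(3)] in auto)
qed

lemma alg1:
  fixes r x y h N1 N2 :: complex
  assumes "r * x ^ kG = y" "h * r ^ k' = N1" "N1 * x ^ a = N2"
  shows "h * (x * y) ^ (a + k') = N2 * x ^ (kG * k' + k') * y ^ a"
proof -
  have yk: "y ^ k' = r ^ k' * x ^ (kG * k')"
    using assms(1) by (metis power_mult power_mult_distrib)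
  have "h * (x * y) ^ (a + k') = h * x ^ a * x ^ k' * (y ^ k' * y ^ a)"
    by (simp add: power_add power_mult_distrib mult_ac)
  also have "\<dots> = (h * r ^ k') * x ^ a * x ^ (kG * k') * x ^ k' * y ^ a"
    unfolding yk by (simp add: mult_ac)
  also have "\<dots> = N2 * x ^ (kG * k' + k') * y ^ a"
    using assms(2,3) by (simp add: power_add mult_ac)
  finally show ?thesis .
qed

lemma rat_on_rcomp:
  assumes D2: "coeff_poly M \<Delta>2" and Dr: "coeff_poly M' \<Delta>r"
    and R: "\<And>\<beta>. \<beta> \<in> M' \<Longrightarrow> rat_on M \<Delta>2 (\<lambda>p. R p \<beta>)"
    and NG: "coeff_poly M NG" "\<And>p. \<Delta>2 p \<noteq> 0 \<Longrightarrow> \<Delta>r (R p) * \<Delta>2 p ^ kG = NG p"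
    and h: "rat_on M' \<Delta>r h"
  shows "rat_on M (\<lambda>p. \<Delta>2 p * NG p) (\<lambda>p. h (R p))"
proof -
  obtain N' k' where N': "coeff_poly M' N'" "\<forall>r. \<Delta>r r \<noteq> 0 \<longrightarrow> h r * \<Delta>r r ^ k' = N' r"
    using h unfolding rat_on_def by blast
  have "rat_on M \<Delta>2 (\<lambda>p. N' (R p))" by (rule rat_on_comp[OF D2 N'(1) R])
  then obtain N'' a where N'': "coeff_poly M N''" "\<forall>p. \<Delta>2 p \<noteq> 0 \<longrightarrow> N' (R p) * \<Delta>2 p ^ a = N'' p"
    unfolding rat_on_def by blast
  show ?thesis unfolding rat_on_def
  proof (rule exI[of _ "\<lambda>p. N'' p * \<Delta>2 p ^ (kG * k' + k') * NG p ^ a"], rule exI[of _ "a + k'"], intro conjI allI impI)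
    show "coeff_poly M (\<lambda>p. N'' p * \<Delta>2 p ^ (kG * k' + k') * NG p ^ a)"
      using N''(1) D2 NG(1) by (intro coeff_poly.mult cp_power)
    fix p assume nz: "\<Delta>2 p * NG p \<noteq> 0"
    then have d2: "\<Delta>2 p \<noteq> 0" and ng: "NG p \<noteq> 0" by auto
    have e1: "\<Delta>r (R p) * \<Delta>2 p ^ kG = NG p" by (rule NG(2)[OF d2])
    then have "\<Delta>r (R p) \<noteq> 0" using ng by auto
    then have e2: "h (R p) * \<Delta>r (R p) ^ k' = N' (R p)" using N'(2) by blast
    have e3: "N' (R p) * \<Delta>2 p ^ a = N'' p" using N''(2) d2 by blast
    show "h (R p) * (\<Delta>2 p * NG p) ^ (a + k') = N'' p * \<Delta>2 p ^ (kG * k' + k') * NG p ^ a"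
      by (rule alg1[OF e1 e2 e3])
  qed
qed

lemma Dop_scale: "Dop n c e (\<lambda>\<alpha>. k * f \<alpha>) \<beta> = k * Dop n c e f \<beta>"
  by (simp add: Dop_def algebra_simps)

lemma Dop_add: "Dop n c e (\<lambda>\<alpha>. f \<alpha> + g \<alpha>) \<beta> = Dop n c e f \<beta> + Dop n c e g \<beta>"
  by (simp add: Dop_def algebra_simps)

lemma Dop_lin:
  assumes "finite J"
  shows "Dop n c e (\<lambda>\<alpha>. \<Sum>j\<in>J. k j * f j \<alpha>) \<beta> = (\<Sum>j\<in>J. k j * Dop n c e (f j) \<beta>)"
  using Dop_sum[OF assms, of n c e "\<lambda>j \<alpha>. k j * f j \<alpha>" \<beta>] Dop_scale by simp

lemma Dop_cong:
  assumes "1 \<le> n" "\<And>\<alpha>. \<alpha> \<in> monoms n (Suc e) \<Longrightarrow> f \<alpha> = g \<alpha>"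
  shows "Dop n c e f \<beta> = Dop n c e g \<beta>"
proof (cases "\<beta> \<in> monoms n e")
  case True
  have "n - 1 < n" "0 < n" using assms by auto
  then have "\<beta>(n-1 := Suc (\<beta> (n-1))) \<in> monoms n (Suc e)" "\<beta>(0 := Suc (\<beta> 0)) \<in> monoms n (Suc e)"
    using upd_monoms[OF True] by auto
  then show ?thesis unfolding Dop_def using assms(2) by simp
next
  case False then show ?thesis by (simp add: Dop_def)
qed

lemma Dop_poly:
  assumes "1 \<le> n" "\<beta> \<in> monoms n e"
  shows "coeff_poly (monoms n (Suc e)) (\<lambda>p. Dop n c e p \<beta>)"
proof -
  have "n - 1 < n" "0 < n" using assms by auto
  then have m: "\<beta>(n-1 := Suc (\<beta> (n-1))) \<in> monoms n (Suc e)" "\<beta>(0 := Suc (\<beta> 0)) \<in> monoms n (Suc e)"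
    using upd_monoms[OF assms(2)] by auto
  have "coeff_poly (monoms n (Suc e)) (\<lambda>p. of_nat (Suc (\<beta> (n-1))) * p (\<beta>(n-1 := Suc (\<beta> (n-1)))) + of_nat c * of_nat (Suc (\<beta> 0)) * p (\<beta>(0 := Suc (\<beta> 0))))"
    by (intro coeff_poly.add coeff_poly.mult coeff_poly.const coeff_poly.coord m)
  then show ?thesis unfolding Dop_def using assms(2) by simp
qed

lemma pow_rat:
  assumes "coeff_poly M \<Delta>" "\<And>i. rat_on M \<Delta> (\<lambda>p. A p i)"
  shows "rat_on M \<Delta> (\<lambda>p. pow_coeffs n d (A p) \<alpha>)"
proof (cases "\<alpha> \<in> monoms n d")
  case True
  have "rat_on M \<Delta> (\<lambda>p. mcoef n d \<alpha> * (\<Prod>i<n. A p i ^ \<alpha> i))"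
    by (intro rat_on_mult rat_on_const rat_on_prod finite_lessThan rat_on_power assms(2))
  then show ?thesis using True by (simp add: pow_coeffs_def)
next
  case False then show ?thesis by (simp add: pow_coeffs_def rat_on_const)
qed

lemma prod_others:
  fixes f :: "nat \<Rightarrow> complex"
  assumes "finite A" "j \<in> A" "(\<Prod>i\<in>A. f i) \<noteq> 0"
  shows "c * (\<Prod>i\<in>A-{j}. f i) / (\<Prod>i\<in>A. f i) = c / f j"
proof -
  have P: "(\<Prod>i\<in>A. f i) = f j * (\<Prod>i\<in>A-{j}. f i)" using assms(1,2) by (rule prod.remove)
  then have "f j \<noteq> 0" "(\<Prod>i\<in>A-{j}. f i) \<noteq> 0" using assms(3) by auto
  then show ?thesis unfolding P by simp
qed

lemma NN_split:
  assumes "2 \<le> n" "1 \<le> e"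
  shows "NN n (Suc e) = NN n e + NN (n-1) (Suc e)"
proof -
  obtain m where m: "n + e - 2 = m" by simp
  have a: "n + Suc e - 2 = Suc m" using assms m by simp
  have b: "e = Suc (e - 1)" using assms by simp
  have c: "n - 1 + Suc e - 2 = m" using assms m by simp
  show ?thesis unfolding NN_def a c m using binomial_Suc_Suc[of m "e-1"] b by simp
qed


lemma claim_step:
  assumes n: "2 \<le> n" and e1: "1 \<le> e" and dD: "Suc e \<le> D"
    and IHq: "claim n e D" and IHr: "claim (n-1) (Suc e) D"
  shows "claim n (Suc e) D"
proof -
  define d where "d = Suc e"
  define M where "M = monoms n d"
  define Mq where "Mq = monoms n e"
  define Mr where "Mr = monoms (n-1) d"
  define N1 where "N1 = NN n e"
  define N2 where "N2 = NN (n-1) d"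
  have n1: "1 \<le> n" and nl: "n - 1 \<noteq> 0" using n by auto
  have NNd: "NN n d = N1 + N2" unfolding N1_def N2_def d_def by (rule NN_split[OF n e1])
  have MrM: "Mr \<subseteq> M" unfolding Mr_def M_def by (rule monoms_sub[OF n1])
  obtain \<Delta>q Cq Aq where q1: "coeff_poly Mq \<Delta>q" and q2: "\<exists>p\<in>forms n e. \<Delta>q p \<noteq> 0"
    and q3: "\<And>j. rat_on Mq \<Delta>q (\<lambda>p. Cq p j)" and q4: "\<And>j i. rat_on Mq \<Delta>q (\<lambda>p. Aq p j i)"
    and q5: "\<And>p. p \<in> forms n e \<Longrightarrow> \<Delta>q p \<noteq> 0 \<Longrightarrow> good_rep n e D p (Cq p) (Aq p)"
    using IHq unfolding claim_def Mq_def by blast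
  obtain \<Delta>r Cr Ar where r1: "coeff_poly Mr \<Delta>r" and r2: "\<exists>p\<in>forms (n-1) d. \<Delta>r p \<noteq> 0"
    and r3: "\<And>j. rat_on Mr \<Delta>r (\<lambda>p. Cr p j)" and r4: "\<And>j i. rat_on Mr \<Delta>r (\<lambda>p. Ar p j i)"
    and r5: "\<And>p. p \<in> forms (n-1) d \<Longrightarrow> \<Delta>r p \<noteq> 0 \<Longrightarrow> good_rep (n-1) d D p (Cr p) (Ar p)"
    using IHr unfolding claim_def Mr_def d_def by blast

  define Qm where "Qm = (\<lambda>p. Dop n d e p)"
  have Qm_forms: "Qm p \<in> forms n e" for p by (simp add: Qm_def forms_def Dop_def)
  have Qm_poly: "\<And>\<beta>. \<beta> \<in> Mq \<Longrightarrow> coeff_poly M (\<lambda>p. Qm p \<beta>)"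
    unfolding Qm_def M_def Mq_def d_def by (rule Dop_poly[OF n1])
  define mu where "mu = (\<lambda>p j. Aq (Qm p) j (n-1) + of_nat d * Aq (Qm p) j 0)"
  define H where "H = (\<lambda>p. \<Prod>j<N1. of_nat d * mu p j)"
  define CP where "CP = (\<lambda>p j. Cq (Qm p) j * (\<Prod>j'\<in>{..<N1}-{j}. of_nat d * mu p j') / H p)"
  define Pp where "Pp = (\<lambda>p \<alpha>. \<Sum>j<N1. CP p j * pow_coeffs n d (Aq (Qm p) j) \<alpha>)"
  define R where "R = (\<lambda>p \<alpha>. if \<alpha> \<in> Mr then p \<alpha> - Pp p \<alpha> else 0)"
  define newC where "newC = (\<lambda>p j. if j < N1 then CP p j else Cr (R p) (j - N1))"
  define newA where "newA = (\<lambda>p j. if j < N1 then Aq (Qm p) j else extf n d (Ar (R p) (j - N1)))"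
  define \<Delta>1 where "\<Delta>1 = (\<lambda>p. \<Delta>q (Qm p))"

  have D1poly: "coeff_poly M \<Delta>1" unfolding \<Delta>1_def by (rule cp_comp[OF q1 Qm_poly])
  have Cq1: "rat_on M \<Delta>1 (\<lambda>p. Cq (Qm p) j)" for j unfolding \<Delta>1_def by (rule rat_on_pcomp[OF q3 q1 Qm_poly])
  have Aq1: "rat_on M \<Delta>1 (\<lambda>p. Aq (Qm p) j i)" for j i unfolding \<Delta>1_def by (rule rat_on_pcomp[OF q4 q1 Qm_poly])
  have mu1: "rat_on M \<Delta>1 (\<lambda>p. mu p j)" for j unfolding mu_def
    by (intro rat_on_add[OF D1poly] rat_on_mult Aq1 rat_on_const)
  have H1: "rat_on M \<Delta>1 H" unfolding H_def
    using rat_on_prod[of "{..<N1}" M \<Delta>1 "\<lambda>j p. of_nat d * mu p j"] mu1 rat_on_mult rat_on_const by blast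
  obtain NH kH where NH: "coeff_poly M NH" "\<And>p. \<Delta>1 p \<noteq> 0 \<Longrightarrow> H p * \<Delta>1 p ^ kH = NH p"
    using H1 unfolding rat_on_def by blast
  define \<Delta>2 where "\<Delta>2 = (\<lambda>p. \<Delta>1 p * NH p)"
  have D2poly: "coeff_poly M \<Delta>2" unfolding \<Delta>2_def using D1poly NH(1) by (rule coeff_poly.mult)
  have CP2: "rat_on M \<Delta>2 (\<lambda>p. CP p j)" for j
  proof -
    have g: "rat_on M \<Delta>1 (\<lambda>p. Cq (Qm p) j * (\<Prod>j'\<in>{..<N1}-{j}. of_nat d * mu p j'))"
      by (intro rat_on_mult Cq1 rat_on_prod finite_Diff finite_lessThan rat_on_const mu1)
    show ?thesis unfolding \<Delta>2_def CP_def by (rule rat_on_div[OF D1poly g NH(1) NH(2)])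
  qed
  have Aq2: "rat_on M \<Delta>2 (\<lambda>p. Aq (Qm p) j i)" for j i
    unfolding \<Delta>2_def by (rule rat_on_ext[OF Aq1 NH(1)])
  have Pp2: "rat_on M \<Delta>2 (\<lambda>p. Pp p \<alpha>)" for \<alpha> unfolding Pp_def
    by (intro rat_on_sum[OF D2poly] finite_lessThan rat_on_mult CP2 pow_rat[OF D2poly] Aq2)
  have R2: "rat_on M \<Delta>2 (\<lambda>p. R p \<alpha>)" if "\<alpha> \<in> Mr" for \<alpha>
  proof -
    have "\<alpha> \<in> M" using that MrM by auto
    then have "rat_on M \<Delta>2 (\<lambda>p. p \<alpha> - Pp p \<alpha>)" by (intro rat_on_sub[OF D2poly] rat_on_coord Pp2)
    then show ?thesis unfolding R_def using that by simp
  qed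
  have G: "rat_on M \<Delta>2 (\<lambda>p. \<Delta>r (R p))" by (rule rat_on_comp[OF D2poly r1 R2])
  obtain NG kG where NG: "coeff_poly M NG" "\<And>p. \<Delta>2 p \<noteq> 0 \<Longrightarrow> \<Delta>r (R p) * \<Delta>2 p ^ kG = NG p"
    using G unfolding rat_on_def by blast
  define \<Delta> where "\<Delta> = (\<lambda>p. \<Delta>2 p * NG p)"
  have Dpoly: "coeff_poly M \<Delta>" unfolding \<Delta>_def using D2poly NG(1) by (rule coeff_poly.mult)
  have Cr3: "rat_on M \<Delta> (\<lambda>p. Cr (R p) k)" for k
    unfolding \<Delta>_def by (rule rat_on_rcomp[OF D2poly r1 R2 NG r3])
  have Ar3: "rat_on M \<Delta> (\<lambda>p. Ar (R p) k i)" for k i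
    unfolding \<Delta>_def by (rule rat_on_rcomp[OF D2poly r1 R2 NG r4])
  have newC3: "rat_on M \<Delta> (\<lambda>p. newC p j)" for j
  proof (cases "j < N1")
    case True
    have "rat_on M \<Delta> (\<lambda>p. CP p j)" unfolding \<Delta>_def by (rule rat_on_ext[OF CP2 NG(1)])
    then show ?thesis using True by (simp add: newC_def)
  next
    case False then show ?thesis using Cr3 by (simp add: newC_def)
  qed
  have newA3: "rat_on M \<Delta> (\<lambda>p. newA p j i)" for j i
  proof (cases "j < N1")
    case True
    have "rat_on M \<Delta> (\<lambda>p. Aq (Qm p) j i)" unfolding \<Delta>_def by (rule rat_on_ext[OF Aq2 NG(1)])
    then show ?thesis using True by (simp add: newA_def)
  next
    case False
    have "rat_on M \<Delta> (\<lambda>p. extf n d (Ar (R p) (j - N1)) i)"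
    proof (cases "i = n - 1")
      case True
      have "rat_on M \<Delta> (\<lambda>p. - of_nat d * Ar (R p) (j - N1) 0)" by (intro rat_on_mult rat_on_const Ar3)
      then show ?thesis using True by (simp add: extf_def)
    next
      case False then show ?thesis using Ar3 by (simp add: extf_def)
    qed
    then show ?thesis using False by (simp add: newA_def)
  qed

  have good: "good_rep n d D p (newC p) (newA p)" if p: "p \<in> forms n d" and Dp: "\<Delta> p \<noteq> 0" for p
  proof -
    have dS: "d = Suc e" by (simp add: d_def)
    have d2: "\<Delta>2 p \<noteq> 0" and ng: "NG p \<noteq> 0" using Dp by (auto simp: \<Delta>_def)
    have d1: "\<Delta>1 p \<noteq> 0" using d2 by (auto simp: \<Delta>2_def)
    have gq: "good_rep n e D (Qm p) (Cq (Qm p)) (Aq (Qm p))"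
      by (rule q5[OF Qm_forms]) (use d1 in \<open>simp add: \<Delta>1_def\<close>)
    have repq: "\<And>\<beta>. \<beta> \<in> Mq \<Longrightarrow> Qm p \<beta> = (\<Sum>j<N1. Cq (Qm p) j * pow_coeffs n e (Aq (Qm p) j) \<beta>)"
      using gq unfolding good_rep_def Mq_def N1_def by blast
    have condq: "\<And>j e'. j < N1 \<Longrightarrow> Aq (Qm p) j 0 \<noteq> 0 \<and> (e < e' \<and> e' \<le> D \<longrightarrow> Aq (Qm p) j (n-1) + of_nat e' * Aq (Qm p) j 0 \<noteq> 0)"
      using gq unfolding good_rep_def N1_def by blast
    have mu_nz: "mu p j \<noteq> 0" if "j < N1" for j
      using condq[OF that, of d] dD by (simp add: mu_def d_def)
    have H_nz: "(\<Prod>j<N1. of_nat d * mu p j) \<noteq> 0"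
      using mu_nz one_plus_nz by (simp add: prod_zero_iff d_def)
    have CPeq: "CP p j = Cq (Qm p) j / (of_nat d * mu p j)" if "j < N1" for j
      unfolding CP_def H_def by (rule prod_others) (use that H_nz in auto)
    have DPp: "Dop n d e (Pp p) \<beta> = Qm p \<beta>" if b: "\<beta> \<in> Mq" for \<beta>
    proof -
      have "Dop n d e (Pp p) \<beta> = (\<Sum>j<N1. CP p j * Dop n d e (pow_coeffs n (Suc e) (Aq (Qm p) j)) \<beta>)"
        unfolding Pp_def dS by (rule Dop_lin) simp
      also have "\<dots> = (\<Sum>j<N1. Cq (Qm p) j * pow_coeffs n e (Aq (Qm p) j) \<beta>)"
      proof (rule sum.cong[OF refl])
        fix j assume "j \<in> {..<N1}"
        then have j: "j < N1" by simp
        have "of_nat d * mu p j \<noteq> 0" using mu_nz[OF j] one_plus_nz by (simp add: d_def)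
        then show "CP p j * Dop n d e (pow_coeffs n (Suc e) (Aq (Qm p) j)) \<beta> = Cq (Qm p) j * pow_coeffs n e (Aq (Qm p) j) \<beta>"
          unfolding Dop_pow[OF n] CPeq[OF j] by (simp add: mu_def dS)
      qed
      also have "\<dots> = Qm p \<beta>" using repq[OF b] by simp
      finally show ?thesis .
    qed
    have R_forms: "R p \<in> forms (n-1) d" by (simp add: R_def forms_def Mr_def)
    have "\<Delta>r (R p) * \<Delta>2 p ^ kG = NG p" by (rule NG(2)[OF d2])
    then have Drnz: "\<Delta>r (R p) \<noteq> 0" using ng by auto
    have gr: "good_rep (n-1) d D (R p) (Cr (R p)) (Ar (R p))" by (rule r5[OF R_forms Drnz])
    have repr: "\<And>\<alpha>. \<alpha> \<in> Mr \<Longrightarrow> R p \<alpha> = (\<Sum>k<N2. Cr (R p) k * pow_coeffs (n-1) d (Ar (R p) k) \<alpha>)"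
      using gr unfolding good_rep_def Mr_def N2_def by blast
    have condr: "\<And>k. k < N2 \<Longrightarrow> Ar (R p) k 0 \<noteq> 0"
      using gr unfolding good_rep_def N2_def by blast
    define L where "L = (\<lambda>\<alpha>. \<Sum>k<N2. Cr (R p) k * pow_coeffs n d (extf n d (Ar (R p) k)) \<alpha>)"
    have DL: "Dop n d e L \<beta> = 0" for \<beta>
    proof -
      have "Dop n d e L \<beta> = (\<Sum>k<N2. Cr (R p) k * Dop n d e (pow_coeffs n (Suc e) (extf n d (Ar (R p) k))) \<beta>)"
        unfolding L_def dS by (rule Dop_lin) simp
      also have "\<dots> = 0" by (simp add: Dop_pow_ext[OF n])
      finally show ?thesis .
    qed
    have LR: "L \<alpha> = R p \<alpha>" if a: "\<alpha> \<in> Mr" for \<alpha>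
      unfolding L_def repr[OF a] using a pow_ext_restrict[OF n, of \<alpha> d d] by (simp add: Mr_def)
    define g where "g = (\<lambda>\<alpha>. p \<alpha> - Pp p \<alpha> - L \<alpha>)"
    have Dg: "Dop n d e g \<beta> = 0" if b: "\<beta> \<in> monoms n e" for \<beta>
    proof -
      have "Dop n d e g \<beta> = Dop n d e p \<beta> - Dop n d e (Pp p) \<beta> - Dop n d e L \<beta>"
        unfolding g_def Dop_diff ..
      also have "\<dots> = 0" using DPp[of \<beta>] b DL by (simp add: Qm_def Mq_def)
      finally show ?thesis .
    qed
    have Rg: "g \<alpha> = 0" if a: "\<alpha> \<in> monoms (n-1) (Suc e)" for \<alpha>
    proof -
      have a': "\<alpha> \<in> Mr" using a by (simp add: Mr_def d_def)
      show ?thesis using LR[OF a'] a' by (simp add: g_def R_def)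
    qed
    have g0: "g \<alpha> = 0" if "\<alpha> \<in> M" for \<alpha>
      using Dop_inj[OF n Dg Rg] that by (simp add: M_def d_def)
    have rep: "p \<alpha> = (\<Sum>j<NN n d. newC p j * pow_coeffs n d (newA p j) \<alpha>)" if a: "\<alpha> \<in> M" for \<alpha>
    proof -
      have s1: "(\<Sum>j<N1. newC p j * pow_coeffs n d (newA p j) \<alpha>) = Pp p \<alpha>"
        unfolding Pp_def by (rule sum.cong[OF refl]) (simp add: newC_def newA_def)
      have s2: "(\<Sum>k<N2. newC p (N1 + k) * pow_coeffs n d (newA p (N1 + k)) \<alpha>) = L \<alpha>"
        unfolding L_def by (rule sum.cong[OF refl]) (simp add: newC_def newA_def)
      have "p \<alpha> - Pp p \<alpha> - L \<alpha> = 0" using g0[OF a] by (simp add: g_def)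
      then have "p \<alpha> = Pp p \<alpha> + L \<alpha>" by (simp only: diff_diff_eq right_minus_eq)
      then show ?thesis unfolding NNd sum_split_add s1 s2 .
    qed
    have cond: "newA p j 0 \<noteq> 0 \<and> (\<forall>e'. d < e' \<and> e' \<le> D \<longrightarrow> newA p j (n-1) + of_nat e' * newA p j 0 \<noteq> 0)"
      if j: "j < NN n d" for j
    proof (cases "j < N1")
      case True
      have nA: "newA p j = Aq (Qm p) j" using True by (simp add: newA_def)
      show ?thesis unfolding nA
      proof (intro conjI allI impI)
        show "Aq (Qm p) j 0 \<noteq> 0" using condq[OF True, of d] by blast
        fix e' assume "d < e' \<and> e' \<le> D"
        then have "e < e' \<and> e' \<le> D" by (simp add: d_def)
        then show "Aq (Qm p) j (n-1) + of_nat e' * Aq (Qm p) j 0 \<noteq> 0" using condq[OF True, of e'] by blast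
      qed
    next
      case False
      define a where "a = Ar (R p) (j - N1)"
      have ka: "a 0 \<noteq> 0" unfolding a_def by (rule condr) (use j False NNd in auto)
      have e0: "newA p j 0 = a 0" using False nl by (simp add: newA_def extf_def a_def)
      have el: "newA p j (n-1) = - of_nat d * a 0" using False by (simp add: newA_def extf_def a_def)
      show ?thesis
      proof (intro conjI allI impI)
        show "newA p j 0 \<noteq> 0" using e0 ka by simp
        fix e' assume "d < e' \<and> e' \<le> D"
        then have "d \<le> e'" "e' - d \<noteq> 0" by auto
        then have "(of_nat e' :: complex) - of_nat d \<noteq> 0"
          using of_nat_diff[of d e'] of_nat_eq_0_iff[of "e' - d"] by (metis (no_types) of_nat_diff)
        then have "(of_nat e' - of_nat d) * a 0 \<noteq> 0" using ka by simp
        moreover have "- of_nat d * a 0 + of_nat e' * a 0 = (of_nat e' - of_nat d) * a 0"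
          by (simp add: left_diff_distrib)
        ultimately show "newA p j (n-1) + of_nat e' * newA p j 0 \<noteq> 0" unfolding e0 el by simp
      qed
    qed
    show ?thesis unfolding good_rep_def using rep cond by (simp add: M_def)
  qed

  have nonempty: "\<exists>p\<in>forms n d. \<Delta> p \<noteq> 0"
  proof -
    have dS: "d = Suc e" by (simp add: d_def)
    obtain q0 where q0: "q0 \<in> forms n e" "\<Delta>q q0 \<noteq> 0" using q2 by blast
    obtain s0 where s0: "s0 \<in> forms (n-1) d" "\<Delta>r s0 \<noteq> 0" using r2 by blast
    have gq: "good_rep n e D q0 (Cq q0) (Aq q0)" by (rule q5[OF q0])
    have repq: "\<And>\<beta>. \<beta> \<in> Mq \<Longrightarrow> q0 \<beta> = (\<Sum>j<N1. Cq q0 j * pow_coeffs n e (Aq q0 j) \<beta>)"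
      using gq unfolding good_rep_def Mq_def N1_def by blast
    have condq: "\<And>j e'. j < N1 \<Longrightarrow> Aq q0 j 0 \<noteq> 0 \<and> (e < e' \<and> e' \<le> D \<longrightarrow> Aq q0 j (n-1) + of_nat e' * Aq q0 j 0 \<noteq> 0)"
      using gq unfolding good_rep_def N1_def by blast
    define mu0 where "mu0 = (\<lambda>j. Aq q0 j (n-1) + of_nat d * Aq q0 j 0)"
    have mu0_nz: "of_nat d * mu0 j \<noteq> 0" if "j < N1" for j
      using condq[OF that, of d] dD one_plus_nz by (simp add: mu0_def d_def)
    have gr: "good_rep (n-1) d D s0 (Cr s0) (Ar s0)" by (rule r5[OF s0])
    have repr: "\<And>\<alpha>. \<alpha> \<in> Mr \<Longrightarrow> s0 \<alpha> = (\<Sum>k<N2. Cr s0 k * pow_coeffs (n-1) d (Ar s0 k) \<alpha>)"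
      using gr unfolding good_rep_def Mr_def N2_def by blast
    define P0 where "P0 = (\<lambda>\<alpha>. \<Sum>j<N1. (Cq q0 j / (of_nat d * mu0 j)) * pow_coeffs n d (Aq q0 j) \<alpha>)"
    define L0 where "L0 = (\<lambda>\<alpha>. \<Sum>k<N2. Cr s0 k * pow_coeffs n d (extf n d (Ar s0 k)) \<alpha>)"
    define p0 where "p0 = (\<lambda>\<alpha>. if \<alpha> \<in> M then P0 \<alpha> + L0 \<alpha> else 0)"
    have p0f: "p0 \<in> forms n d" by (simp add: p0_def forms_def M_def)
    have DP0: "Dop n d e P0 \<beta> = q0 \<beta>" if b: "\<beta> \<in> Mq" for \<beta>
    proof -
      have "Dop n d e P0 \<beta> = (\<Sum>j<N1. (Cq q0 j / (of_nat d * mu0 j)) * Dop n d e (pow_coeffs n (Suc e) (Aq q0 j)) \<beta>)"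
        unfolding P0_def dS by (rule Dop_lin) simp
      also have "\<dots> = (\<Sum>j<N1. Cq q0 j * pow_coeffs n e (Aq q0 j) \<beta>)"
      proof (rule sum.cong[OF refl])
        fix j assume "j \<in> {..<N1}"
        then have j: "j < N1" by simp
        show "(Cq q0 j / (of_nat d * mu0 j)) * Dop n d e (pow_coeffs n (Suc e) (Aq q0 j)) \<beta> = Cq q0 j * pow_coeffs n e (Aq q0 j) \<beta>"
          unfolding Dop_pow[OF n] using mu0_nz[OF j] by (simp add: mu0_def dS)
      qed
      also have "\<dots> = q0 \<beta>" using repq[OF b] by simp
      finally show ?thesis .
    qed
    have DL0: "Dop n d e L0 \<beta> = 0" for \<beta>
    proof -
      have "Dop n d e L0 \<beta> = (\<Sum>k<N2. Cr s0 k * Dop n d e (pow_coeffs n (Suc e) (extf n d (Ar s0 k))) \<beta>)"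
        unfolding L0_def dS by (rule Dop_lin) simp
      also have "\<dots> = 0" by (simp add: Dop_pow_ext[OF n])
      finally show ?thesis .
    qed
    have Qp0: "Qm p0 = q0"
    proof
      fix \<beta> show "Qm p0 \<beta> = q0 \<beta>"
      proof (cases "\<beta> \<in> Mq")
        case True
        have "Qm p0 \<beta> = Dop n d e (\<lambda>\<alpha>. P0 \<alpha> + L0 \<alpha>) \<beta>" unfolding Qm_def
          by (rule Dop_cong[OF n1]) (simp add: p0_def M_def d_def)
        also have "\<dots> = q0 \<beta>" unfolding Dop_add DP0[OF True] DL0 by simp
        finally show ?thesis .
      next
        case False
        then show ?thesis using q0(1) by (simp add: Qm_def Dop_def Mq_def forms_def)
      qed
    qed
    have mueq: "mu p0 j = mu0 j" for j by (simp add: mu_def mu0_def Qp0)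
    have d1: "\<Delta>1 p0 \<noteq> 0" using q0(2) by (simp add: \<Delta>1_def Qp0)
    have Hnz: "H p0 \<noteq> 0" unfolding H_def mueq using mu0_nz by (simp add: prod_zero_iff d_def)
    have "NH p0 \<noteq> 0" using NH(2)[OF d1] Hnz d1 by auto
    then have d2: "\<Delta>2 p0 \<noteq> 0" using d1 by (simp add: \<Delta>2_def)
    have CPeq: "CP p0 j = Cq q0 j / (of_nat d * mu0 j)" if "j < N1" for j
    proof -
      have "CP p0 j = Cq q0 j * (\<Prod>j'\<in>{..<N1}-{j}. of_nat d * mu0 j') / (\<Prod>j'<N1. of_nat d * mu0 j')"
        unfolding CP_def H_def mueq Qp0 ..
      also have "\<dots> = Cq q0 j / (of_nat d * mu0 j)"
        by (rule prod_others) (use that mu0_nz in \<open>auto simp: prod_zero_iff\<close>)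
      finally show ?thesis .
    qed
    have Ppeq: "Pp p0 \<alpha> = P0 \<alpha>" for \<alpha>
      unfolding Pp_def P0_def by (rule sum.cong[OF refl]) (simp add: CPeq Qp0)
    have Rp0: "R p0 = s0"
    proof
      fix \<alpha> show "R p0 \<alpha> = s0 \<alpha>"
      proof (cases "\<alpha> \<in> Mr")
        case True
        then have aM: "\<alpha> \<in> M" using MrM by auto
        have "R p0 \<alpha> = L0 \<alpha>" using True aM by (simp add: R_def Ppeq) (simp add: p0_def)
        also have "\<dots> = s0 \<alpha>" unfolding L0_def repr[OF True]
          using True pow_ext_restrict[OF n, of \<alpha> d d] by (simp add: Mr_def)
        finally show ?thesis .
      next
        case False then show ?thesis using s0(1) by (simp add: R_def forms_def Mr_def)
      qed
    qed
    have "NG p0 \<noteq> 0" using NG(2)[OF d2] s0(2) d2 by (simp add: Rp0) (metis mult_eq_0_iff power_eq_0_iff)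
    then have "\<Delta> p0 \<noteq> 0" using d2 by (simp add: \<Delta>_def)
    then show ?thesis using p0f by blast
  qed

  show ?thesis unfolding claim_def d_def[symmetric] M_def[symmetric]
    using Dpoly nonempty newC3 newA3 good by blast
qed


lemma claim_all: "1 \<le> n \<Longrightarrow> 1 \<le> d \<Longrightarrow> d \<le> D \<Longrightarrow> claim n d D"
proof (induction "n + d" arbitrary: n d rule: less_induct)
  case less
  show ?case
  proof (cases "n = 1")
    case True then show ?thesis using claim_n1 by simp
  next
    case False
    then have n2: "2 \<le> n" using less.prems by simp
    show ?thesis
    proof (cases "d = 1")
      case True then show ?thesis using claim_d1[OF n2] by simp
    next
      case False
      then obtain e where e: "d = Suc e" "1 \<le> e" using less.prems by (cases d) auto
      have IHq: "claim n e D" by (rule less.hyps) (use e less.prems in auto)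
      have IHr: "claim (n-1) (Suc e) D" by (rule less.hyps) (use e less.prems n2 in auto)
      show ?thesis unfolding e(1) by (rule claim_step[OF n2 e(2) _ IHq IHr]) (use e less.prems in auto)
    qed
  qed
qed

lemma complex_root_ex: "0 < d \<Longrightarrow> \<exists>z::complex. z ^ d = c"
proof -
  assume d: "0 < d"
  define z where "z = rcis (root d (cmod c)) (Arg c / real d)"
  have "z ^ d = rcis (root d (cmod c) ^ d) (real d * (Arg c / real d))"
    unfolding z_def by (rule DeMoivre2)
  also have "\<dots> = rcis (cmod c) (Arg c)" using d by (simp add: real_root_pow_pos2)
  also have "\<dots> = c" by (rule rcis_cmod_Arg)
  finally show ?thesis by blast
qed

theorem corollary3p10:
  fixes n d :: nat
  assumes "n \<ge> 1" and "d \<ge> 1"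
  shows "general_form n d (sum_of_powers n d (((n + d) - 2) choose (d - 1)))"
proof -
  obtain \<Delta> C A where c1: "coeff_poly (monoms n d) \<Delta>" and c2: "\<exists>p\<in>forms n d. \<Delta> p \<noteq> 0"
    and c5: "\<And>p. p \<in> forms n d \<Longrightarrow> \<Delta> p \<noteq> 0 \<Longrightarrow> good_rep n d d p (C p) (A p)"
    using claim_all[OF assms(1) assms(2) order_refl[of d]] unfolding claim_def by blast
  define U where "U = {p \<in> forms n d. \<exists>f\<in>{\<Delta>}. f p \<noteq> 0}"
  have zo: "zariski_open_forms n d U" unfolding zariski_open_forms_def U_def
    by (rule exI[of _ "{\<Delta>}"]) (simp add: c1)
  have ne: "U \<noteq> {}" using c2 by (auto simp: U_def)
  have sp: "sum_of_powers n d (((n + d) - 2) choose (d - 1)) p" if pU: "p \<in> U" for p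
  proof -
    have p: "p \<in> forms n d" "\<Delta> p \<noteq> 0" using pU by (auto simp: U_def)
    have gr: "good_rep n d d p (C p) (A p)" by (rule c5[OF p])
    have rep: "\<And>\<alpha>. \<alpha> \<in> monoms n d \<Longrightarrow> p \<alpha> = (\<Sum>j<NN n d. C p j * pow_coeffs n d (A p j) \<alpha>)"
      using gr unfolding good_rep_def by blast
    have "\<forall>j. \<exists>z::complex. z ^ d = C p j" using complex_root_ex assms(2) by simp
    then obtain z where z: "\<And>j. z j ^ d = C p j" by metis
    define l where "l = (\<lambda>j i. z j * A p j i)"
    show ?thesis unfolding sum_of_powers_def
    proof (rule exI[of _ l], rule allI)
      fix x
      have "eval_form n d p x = (\<Sum>\<alpha>\<in>monoms n d. (\<Sum>j<NN n d. C p j * pow_coeffs n d (A p j) \<alpha>) * (\<Prod>i<n. x i ^ \<alpha> i))"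
        unfolding eval_form_def by (rule sum.cong[OF refl]) (simp add: rep)
      also have "\<dots> = (\<Sum>j<NN n d. C p j * eval_form n d (pow_coeffs n d (A p j)) x)"
        unfolding eval_form_def by (simp add: sum_distrib_left sum_distrib_right mult.assoc sum.swap[of _ "monoms n d"])
      also have "\<dots> = (\<Sum>j<NN n d. (\<Sum>i<n. l j i * x i) ^ d)"
      proof (rule sum.cong[OF refl])
        fix j
        have "C p j * eval_form n d (pow_coeffs n d (A p j)) x = z j ^ d * (\<Sum>i<n. A p j i * x i) ^ d"
          unfolding eval_pow_coeffs z ..
        also have "\<dots> = (\<Sum>i<n. l j i * x i) ^ d"
          unfolding l_def power_mult_distrib[symmetric] sum_distrib_left by (simp add: mult.assoc)
        finally show "C p j * eval_form n d (pow_coeffs n d (A p j)) x = (\<Sum>i<n. l j i * x i) ^ d" .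
      qed
      finally show "eval_form n d p x = (\<Sum>j<((n + d) - 2) choose (d - 1). (\<Sum>i<n. l j i * x i) ^ d)"
        by (simp add: NN_def)
    qed
  qed
  show ?thesis unfolding general_form_def using zo ne sp by blast
qed


end
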